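(* Let $(X,\pi)$ be a finite symmetric two-player zero-sum game, i.e. $\pi(x,y)=-\pi(y,x)$ for all $x,y\in X$. Imitation is subject to a money pump in $(X,\pi)$ if and only if $(X,\pi)$ is a generalized rock-paper-scissors game.
   Context: $\pi(x,y)$ is the payoff of the player choosing $x$ against $y$. Relative payoff: $\Delta(x,y)=\pi(x,y)-\pi(y,x)$. Imitate-the-best: given initial $y_0\in X$ and any opponent sequence $(x_t)_{t\ge0}$, $y_t=x_{t-1}$ if $\Delta(x_{t-1},y_{t-1})>0$ and $y_t=y_{t-1}$ otherwise. Imitation is not subject to a money pump if there is $M\in\mathbb{R}_+$ such that for every $y_0\in X$ and every sequence $(x_t)$, $\limsup_{T\to\infty}\sum_{t=0}^T\Delta(x_t,y_t)\le M$; otherwise it is subject to a money pump. A symmetric zero-sum game $(Y,\pi)$ is a generalized rock-paper-scissors matrix if for every $y\in Y$ there is $x\in Y$ with $\pi(x,y)>0$; $(X,\pi)$ is a generalized rock-paper-scissors game if some nonempty $\bar X\subseteq X$ makes $(\bar X,\pi|_{\bar X\times\bar X})$ a generalized rock-paper-scissors matrix. *)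

theory Defs
  imports "HOL-Analysis.Analysis"
begin

text \<open>A game is a strategy set X together with a payoff function p, where p x y is the
payoff of the player choosing x against y.\<close>

definition rel_payoff :: "('a \<Rightarrow> 'a \<Rightarrow> real) \<Rightarrow> 'a \<Rightarrow> 'a \<Rightarrow> real" where
  "rel_payoff p x y = p x y - p y x"

fun imitate :: "('a \<Rightarrow> 'a \<Rightarrow> real) \<Rightarrow> 'a \<Rightarrow> (nat \<Rightarrow> 'a) \<Rightarrow> nat \<Rightarrow> 'a" where
  "imitate p y0 xs 0 = y0"
| "imitate p y0 xs (Suc t) =
     (if rel_payoff p (xs t) (imitate p y0 xs t) > 0 then xs t else imitate p y0 xs t)"

definition not_money_pump :: "'a set \<Rightarrow> ('a \<Rightarrow> 'a \<Rightarrow> real) \<Rightarrow> bool" where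
  "not_money_pump X p \<longleftrightarrow>
     (\<exists>M::real. M \<ge> 0 \<and>
        (\<forall>y0\<in>X. \<forall>xs. (\<forall>t. xs t \<in> X) \<longrightarrow>
           limsup (\<lambda>T. ereal (\<Sum>t\<le>T. rel_payoff p (xs t) (imitate p y0 xs t))) \<le> ereal M))"

definition money_pump :: "'a set \<Rightarrow> ('a \<Rightarrow> 'a \<Rightarrow> real) \<Rightarrow> bool" where
  "money_pump X p \<longleftrightarrow> \<not> not_money_pump X p"

definition symmetric_zero_sum :: "'a set \<Rightarrow> ('a \<Rightarrow> 'a \<Rightarrow> real) \<Rightarrow> bool" where
  "symmetric_zero_sum X p \<longleftrightarrow> (\<forall>x\<in>X. \<forall>y\<in>X. p x y = - p y x)"

definition gen_rps_matrix :: "'a set \<Rightarrow> ('a \<Rightarrow> 'a \<Rightarrow> real) \<Rightarrow> bool" where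
  "gen_rps_matrix Y p \<longleftrightarrow> symmetric_zero_sum Y p \<and> (\<forall>y\<in>Y. \<exists>x\<in>Y. p x y > 0)"

definition gen_rps_game :: "'a set \<Rightarrow> ('a \<Rightarrow> 'a \<Rightarrow> real) \<Rightarrow> bool" where
  "gen_rps_game X p \<longleftrightarrow> (\<exists>Xb. Xb \<noteq> {} \<and> Xb \<subseteq> X \<and> gen_rps_matrix Xb p)"

end

theory Submission
  imports Defs
begin

lemma relp2:
  assumes "symmetric_zero_sum X p" "x \<in> X" "y \<in> X"
  shows "rel_payoff p x y = 2 * p x y"
proof -
  have "p y x = - p x y" using assms unfolding symmetric_zero_sum_def by blast
  then show ?thesis unfolding rel_payoff_def by simp
qed

lemma wfQ:
  assumes "symmetric_zero_sum X p" "\<not> gen_rps_game X p"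
  shows "wf {(x,y). x \<in> X \<and> y \<in> X \<and> p x y > 0}" (is "wf ?Q")
  unfolding wf_eq_minimal
proof (intro allI impI)
  fix S :: "'a set" and x assume xS: "x \<in> S"
  show "\<exists>z\<in>S. \<forall>y. (y, z) \<in> ?Q \<longrightarrow> y \<notin> S"
  proof (rule ccontr)
    assume H0: "\<not> (\<exists>z\<in>S. \<forall>y. (y, z) \<in> ?Q \<longrightarrow> y \<notin> S)"
    have H: "\<And>z. z \<in> S \<Longrightarrow> \<exists>y. y \<in> X \<and> z \<in> X \<and> p y z > 0 \<and> y \<in> S"
    proof -
      fix z assume "z \<in> S"
      have "\<not> (\<forall>y. (y, z) \<in> ?Q \<longrightarrow> y \<notin> S)"
      proof
        assume A: "\<forall>y. (y, z) \<in> ?Q \<longrightarrow> y \<notin> S"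
        have "\<exists>z\<in>S. \<forall>y. (y, z) \<in> ?Q \<longrightarrow> y \<notin> S" using A \<open>z \<in> S\<close> by blast
        then show False using H0 by simp
      qed
      then show "\<exists>y. y \<in> X \<and> z \<in> X \<and> p y z > 0 \<and> y \<in> S" by simp
    qed
    have x: "x \<in> X" using H[OF xS] by (elim exE conjE)
    have sz0: "\<forall>x\<in>X. \<forall>y\<in>X. p x y = - p y x" using assms(1) unfolding symmetric_zero_sum_def .
    have sz: "symmetric_zero_sum (S \<inter> X) p" unfolding symmetric_zero_sum_def
    proof (intro ballI)
      fix a b assume "a \<in> S \<inter> X" "b \<in> S \<inter> X"
      then have "a \<in> X" "b \<in> X" by auto
      then show "p a b = - p b a" using sz0 by blast
    qed
    have bt: "\<forall>y\<in>S \<inter> X. \<exists>x\<in>S \<inter> X. 0 < p x y"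
    proof
      fix y assume "y \<in> S \<inter> X"
      then obtain z where "z \<in> X" "p z y > 0" "z \<in> S" using H[of y] by blast
      then show "\<exists>x\<in>S \<inter> X. 0 < p x y" by (intro bexI[of _ z]) auto
    qed
    have "gen_rps_matrix (S \<inter> X) p" unfolding gen_rps_matrix_def using sz bt by (rule conjI)
    moreover have "S \<inter> X \<noteq> {}" using x xS by (intro notI) (drule equalityD1, drule subsetD[of _ _ x], simp_all)
    ultimately have "gen_rps_game X p" unfolding gen_rps_game_def by (intro exI[of _ "S \<inter> X"]) simp
    then show False using assms(2) by (rule notE[rotated])
  qed
qed

lemma partA:
  assumes fin: "finite X" and sz: "symmetric_zero_sum X p" and ng: "\<not> gen_rps_game X p"
  shows "not_money_pump X p"
proof -
  define Q where "Q = {(x,y). x \<in> X \<and> y \<in> X \<and> p x y > 0}"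
  have wf: "wf (Q\<^sup>+)" using wfQ[OF sz ng] wf_trancl unfolding Q_def by blast
  define D where "D = Max ({rel_payoff p a b | a b. a \<in> X \<and> b \<in> X} \<union> {0})"
  have finD: "finite ({rel_payoff p a b | a b. a \<in> X \<and> b \<in> X} \<union> {0})"
  proof -
    have "{rel_payoff p a b | a b. a \<in> X \<and> b \<in> X} = (\<lambda>(a,b). rel_payoff p a b) ` (X \<times> X)" by auto
    then show ?thesis using fin by simp
  qed
  have D0: "D \<ge> 0" unfolding D_def using finD by simp
  have DB: "\<And>a b. a \<in> X \<Longrightarrow> b \<in> X \<Longrightarrow> rel_payoff p a b \<le> D"
    unfolding D_def using finD by (intro Max_ge) auto
  show ?thesis unfolding not_money_pump_def
  proof (intro exI[of _ "real (card X) * D"] conjI ballI allI impI)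
    show "0 \<le> real (card X) * D" using D0 by simp
    fix y0 and xs :: "nat \<Rightarrow> 'a" assume y0: "y0 \<in> X" and xsX: "\<forall>t. xs t \<in> X"
    define ys where "ys = imitate p y0 xs"
    define d where "d t = rel_payoff p (xs t) (ys t)" for t
    have ysX: "ys t \<in> X" for t by (induction t) (auto simp: ys_def y0 xsX)
    have stp: "(ys (Suc t), ys t) \<in> Q\<^sup>*" for t
      using ysX[of t] xsX relp2[OF sz, of "xs t" "ys t"]
      by (auto simp: ys_def Q_def)
    have stepC: "d t > 0 \<Longrightarrow> (ys (Suc t), ys t) \<in> Q" for t
      using ysX[of t] xsX relp2[OF sz, of "xs t" "ys t"]
      by (auto simp: ys_def Q_def d_def)
    have chain: "s \<le> j \<Longrightarrow> (ys j, ys s) \<in> Q\<^sup>*" for s j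
    proof (induction j rule: dec_induct)
      case base then show ?case by simp
    next
      case (step n) then show ?case using stp[of n] by (meson rtrancl_trans)
    qed
    have inj: "inj_on ys {t. d t > 0}"
    proof (rule inj_onI)
      fix s t assume s: "s \<in> {t. d t > 0}" and t: "t \<in> {t. d t > 0}" and eq: "ys s = ys t"
      show "s = t"
      proof (rule ccontr)
        assume "s \<noteq> t"
        then consider "s < t" | "t < s" by linarith
        then show False
        proof cases
          case 1
          have "(ys t, ys (Suc s)) \<in> Q\<^sup>*" using chain 1 by simp
          then have "(ys t, ys s) \<in> Q\<^sup>+" using stepC[of s] s by (simp add: rtrancl_into_trancl1)
          moreover have "(ys s, ys s) \<notin> Q\<^sup>+" using wf by (rule wf_not_refl)
          ultimately show False using eq by simp
        next
          case 2
          have "(ys s, ys (Suc t)) \<in> Q\<^sup>*" using chain 2 by simp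
          then have "(ys s, ys t) \<in> Q\<^sup>+" using stepC[of t] t by (simp add: rtrancl_into_trancl1)
          moreover have "(ys s, ys s) \<notin> Q\<^sup>+" using wf by (rule wf_not_refl)
          ultimately show False using eq by simp
        qed
      qed
    qed
    have bnd: "(\<Sum>t\<le>T. d t) \<le> real (card X) * D" for T
    proof -
      have "(\<Sum>t\<le>T. d t) \<le> (\<Sum>t\<le>T. (if d t > 0 then D else 0))"
        using DB xsX ysX by (intro sum_mono) (auto simp: d_def)
      also have "\<dots> = D * real (card {t \<in> {..T}. d t > 0})"
        by (simp add: sum.If_cases Int_def atMost_def)
      also have "card {t \<in> {..T}. d t > 0} \<le> card X"
        using ysX inj by (intro card_inj_on_le[where f=ys]) (auto intro: inj_on_subset simp: fin)
      then have "real (card {t \<in> {..T}. d t > 0}) \<le> real (card X)" by simp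
      then have "D * real (card {t \<in> {..T}. d t > 0}) \<le> D * real (card X)"
        using D0 by (rule mult_left_mono)
      then have "D * real (card {t \<in> {..T}. d t > 0}) \<le> real (card X) * D"
        by (simp add: mult.commute)
      finally show ?thesis .
    qed
    show "limsup (\<lambda>T. ereal (\<Sum>t\<le>T. rel_payoff p (xs t) (imitate p y0 xs t))) \<le> ereal (real (card X) * D)"
    proof (rule Limsup_bounded, rule always_eventually, rule allI)
      fix T
      show "ereal (\<Sum>t\<le>T. rel_payoff p (xs t) (imitate p y0 xs t)) \<le> ereal (real (card X) * D)"
        using bnd[of T] unfolding d_def ys_def by simp
    qed
  qed
qed


lemma partB:
  assumes fin: "finite X" and sz: "symmetric_zero_sum X p" and g: "gen_rps_game X p"
  shows "money_pump X p"
proof -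
  obtain Xb where Xb: "Xb \<noteq> {}" "Xb \<subseteq> X" "gen_rps_matrix Xb p"
    using g unfolding gen_rps_game_def by blast
  have "\<forall>y\<in>Xb. \<exists>x. x \<in> Xb \<and> p x y > 0" using Xb(3) unfolding gen_rps_matrix_def by blast
  then have "\<exists>b. \<forall>y\<in>Xb. b y \<in> Xb \<and> p (b y) y > 0" by (rule bchoice)
  then obtain b where b0: "\<forall>y\<in>Xb. b y \<in> Xb \<and> p (b y) y > 0" by (elim exE)
  have b: "\<And>y. y \<in> Xb \<Longrightarrow> b y \<in> Xb \<and> p (b y) y > 0" using b0 by blast
  obtain y0 where y0: "y0 \<in> Xb" using Xb(1) by blast
  have finb: "finite Xb" using fin Xb(2) finite_subset by blast
  define ys where "ys = rec_nat y0 (\<lambda>_ y. b y)"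
  have ys0: "ys 0 = y0" and ysS: "ys (Suc n) = b (ys n)" for n by (simp_all add: ys_def)
  define xs where "xs t = b (ys t)" for t
  have ysXb: "ys t \<in> Xb" for t by (induction t) (auto simp: ys0 ysS y0 b)
  have imi: "imitate p y0 xs t = ys t" for t
  proof (induction t)
    case 0 then show ?case by (simp add: ys0)
  next
    case (Suc t)
    have i1: "xs t \<in> X" "ys t \<in> X" "p (xs t) (ys t) > 0"
      using b[OF ysXb[of t]] ysXb[of t] Xb(2) by (auto simp: xs_def)
    have "rel_payoff p (xs t) (ys t) > 0"
      using relp2[OF sz i1(1,2)] i1(3) by simp
    then show ?case using Suc by (simp add: ysS xs_def)
  qed
  define f where "f y = rel_payoff p (b y) y" for y
  define \<delta> where "\<delta> = Min (f ` Xb)"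
  have fpos: "y \<in> Xb \<Longrightarrow> f y > 0" for y
  proof -
    assume y: "y \<in> Xb"
    then have i1: "b y \<in> X" "y \<in> X" "p (b y) y > 0" using b[OF y] Xb(2) by auto
    show ?thesis using relp2[OF sz i1(1,2)] i1(3) by (simp add: f_def)
  qed
  have dpos: "\<delta> > 0" unfolding \<delta>_def using finb Xb(1) fpos by (subst Min_gr_iff) auto
  have dle: "\<delta> \<le> rel_payoff p (xs t) (imitate p y0 xs t)" for t
  proof -
    have "\<delta> \<le> f (ys t)" unfolding \<delta>_def using finb ysXb[of t] by (intro Min_le) auto
    then show ?thesis by (simp add: imi f_def xs_def)
  qed
  define S where "S T = (\<Sum>t\<le>T. rel_payoff p (xs t) (imitate p y0 xs t))" for T
  have Sge: "real (Suc T) * \<delta> \<le> S T" for T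
  proof -
    have "(\<Sum>t\<le>T. \<delta>) \<le> S T" unfolding S_def by (intro sum_mono dle)
    then show ?thesis by simp
  qed
  have lim: "((\<lambda>T. ereal (S T)) \<longlongrightarrow> \<infinity>) sequentially"
    unfolding tendsto_PInfty
  proof
    fix r :: real
    obtain N :: nat where N: "r / \<delta> < real N" using reals_Archimedean2 by blast
    show "\<forall>\<^sub>F x in sequentially. ereal r < ereal (S x)"
      unfolding eventually_sequentially
    proof (intro exI allI impI)
      fix T assume "N \<le> T"
      then have "r < real N * \<delta>" using N dpos by (simp add: pos_divide_less_eq)
      also have "\<dots> \<le> real (Suc T) * \<delta>" using \<open>N \<le> T\<close> dpos by (intro mult_right_mono) auto
      also have "\<dots> \<le> S T" by (rule Sge)
      finally show "ereal r < ereal (S T)" by simp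
    qed
  qed
  have ls: "limsup (\<lambda>T. ereal (S T)) = \<infinity>"
    by (rule lim_imp_Limsup[OF _ lim]) simp
  show ?thesis unfolding money_pump_def not_money_pump_def
  proof
    assume "\<exists>M. 0 \<le> M \<and> (\<forall>y0\<in>X. \<forall>xs. (\<forall>t. xs t \<in> X) \<longrightarrow>
        limsup (\<lambda>T. ereal (\<Sum>t\<le>T. rel_payoff p (xs t) (imitate p y0 xs t))) \<le> ereal M)"
    then obtain M where M: "\<forall>y0\<in>X. \<forall>xs. (\<forall>t. xs t \<in> X) \<longrightarrow>
        limsup (\<lambda>T. ereal (\<Sum>t\<le>T. rel_payoff p (xs t) (imitate p y0 xs t))) \<le> ereal M" by blast
    have xsX: "\<And>t. xs t \<in> X" using ysXb b Xb(2) by (auto simp: xs_def)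
    have y0X: "y0 \<in> X" using y0 Xb(2) by blast
    have "limsup (\<lambda>T. ereal (S T)) \<le> ereal M" unfolding S_def using M[rule_format, OF y0X xsX] .
    then show False using ls by simp
  qed
qed

theorem corollary2:
  fixes X :: "'a set" and p :: "'a \<Rightarrow> 'a \<Rightarrow> real"
  assumes "finite X"
    and "symmetric_zero_sum X p"
  shows "money_pump X p \<longleftrightarrow> gen_rps_game X p"
  using partA[OF assms] partB[OF assms] unfolding money_pump_def by blast

end
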